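(* Consider the TGSS iteration with data $y^\delta$, $\|y^\delta-y\|\le\delta$, $\delta\ge0$. Let $\tau>\frac{1+\eta}{1-\eta}$, $\mu>1$, $\Psi:=(1-\eta)-\tau^{-1}(1+\eta)$, and let $k_*=k_*(\delta,y^\delta):=\min\{k\in\mathbb N_0:\|r_k^\delta\|\le\tau\delta\}$ (with $k_*=\infty$ if no such $k$ exists). Assume the coupling condition $$\lambda_k^\delta(\lambda_k^\delta+1)\|x_k^\delta-x_{k-1}^\delta\|^2\le\frac{\Psi^2\|r_k^\delta\|^2}{\mu c_F^2}$$ holds for all $0\le k<k_*$. Then the iterates $x_k^\delta$ are well defined for all $k\le k_*$ (with all $z_k^\delta\in B_{4\rho}(x_0)$ for $k<k_*$), $$\|x_{k+1}^\delta-x_*\|\le\|x_k^\delta-x_*\|\quad\text{for all }-1\le k<k_*,$$ $x_k^\delta\in B_\rho(x_* )\subset B_{2\rho}(x_0)$ for all $-1\le k\le k_*$, and $$\sum_{k=0}^{k_*-1}\|F(z_k^\delta)-y^\delta\|^2\le\frac{c_F^2}{\bar\mu\Psi^2}\|x_0-x_*\|^2,\qquad \bar\mu:=\frac{\mu-1}{\mu}.$$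
   Context: Setting: $\mathcal X,\mathcal Y$ are real Hilbert spaces, $F:\mathcal D(F)\subset\mathcal X\to\mathcal Y$ is continuously Fréchet differentiable with derivative $F'(x)\in\mathcal L(\mathcal X,\mathcal Y)$ and Hilbert-space adjoint $F'(x)^*$; $x_0\in\mathcal X$ and $\rho>0$ satisfy $B_{4\rho}(x_0)\subset\mathcal D(F)$, where $B_r(x)$ is the closed ball of radius $r$ about $x$. Standing assumptions: (A1) $F(x)=y$ has a solution $x_*\in B_\rho(x_0)$; (A2) there is $\eta\in(0,1)$ with $\|F(x)-F(\tilde x)-F'(x)(x-\tilde x)\|\le\eta\|F(x)-F(\tilde x)\|$ for all $x,\tilde x\in B_{4\rho}(x_0)$; (A3) $0<\|F'(x)\|\le c_F$ for all $x\in B_{4\rho}(x_0)$. Data: $y^\delta\in\mathcal Y$ with $\|y^\delta-y\|\le\delta$, $\delta\ge0$ ($\delta=0$ means $y^\delta=y$). Notation: for $u\in\mathcal X$, $a\in\mathbb R$, $\xi\ge0$: $H(u,a)=\{x:\langle u,x\rangle=a\}$, $H_>(u,a)=\{x:\langle u,x\rangle>a\}$, $H(u,a,\xi)=\{x:|\langle u,x\rangle-a|\le\xi\}$. $P_C$ is the metric projection onto a nonempty closed convex set $C$. TGSS iteration (for data $y^\delta$, iterates carry superscript $\delta$): fix an integer $K\ge1$; set $x_{-1}^\delta=x_0^\delta=x_0$. For $k=0,1,2,\dots$: choose $\lambda_k^\delta\in[0,1]$ with $\lambda_0^\delta=0$, put $z_k^\delta=x_k^\delta+\lambda_k^\delta(x_k^\delta-x_{k-1}^\delta)$,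 $r_k^\delta=F(z_k^\delta)-y^\delta$, $u_k^\delta=F'(z_k^\delta)^*r_k^\delta$, $\alpha_k^\delta=\langle u_k^\delta,z_k^\delta\rangle-\|r_k^\delta\|^2$, $\xi_k^\delta=(\delta+\eta(\|r_k^\delta\|+\delta))\|r_k^\delta\|$, $H_k^\delta=H(u_k^\delta,\alpha_k^\delta,\xi_k^\delta)$. Choose a finite index set $I_k\subset\{k-K,\dots,k\}\cap\mathbb N_0$ with $k\in I_k$, written $I_k=\{k_1>\dots>k_s\}$, $k_1=k$; set $p_1=P_{H^\delta_{k_1}}(z_k^\delta)$, $p_j=P_{H^\delta_{k_1}\cap\dots\cap H^\delta_{k_j}}(p_{j-1})$ for $j=2,\dots,s$, and $x_{k+1}^\delta=p_s$. The iteration is run while $k<k_*$. For $\delta=0$ the superscript is dropped. *)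

theory Defs
  imports "HOL-Analysis.Analysis" "HOL-Library.Extended_Nat"
begin

definition strip :: "'a::real_inner \<Rightarrow> real \<Rightarrow> real \<Rightarrow> 'a set" where
  "strip u a \<xi> = {x. \<bar>inner u x - a\<bar> \<le> \<xi>}"

text \<open>Metric projection onto C (a nearest point; meaningful when it exists).\<close>
definition mproj :: "'a::real_normed_vector set \<Rightarrow> 'a \<Rightarrow> 'a" where
  "mproj C v = (SOME p. p \<in> C \<and> (\<forall>q\<in>C. norm (v - p) \<le> norm (v - q)))"

definition has_unique_proj :: "'a::real_normed_vector set \<Rightarrow> 'a \<Rightarrow> bool" where
  "has_unique_proj C v \<longleftrightarrow> (\<exists>!p. p \<in> C \<and> (\<forall>q\<in>C. norm (v - p) \<le> norm (v - q)))"

text \<open>Quantities of step k, computed from a sequence X of iterates (X k = x_k for k >= 0,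
  x_{-1} = x0).  Parameters: F, Fadj (Fadj z = F'(z)^*), y^delta, delta, eta, x0, lambda.\<close>

definition tg_prev :: "'a \<Rightarrow> (nat \<Rightarrow> 'a) \<Rightarrow> nat \<Rightarrow> 'a" where
  "tg_prev x0 X k = (if k = 0 then x0 else X (k - 1))"

definition tg_z :: "'a::real_vector \<Rightarrow> (nat \<Rightarrow> real) \<Rightarrow> (nat \<Rightarrow> 'a) \<Rightarrow> nat \<Rightarrow> 'a" where
  "tg_z x0 lam X k = X k + lam k *\<^sub>R (X k - tg_prev x0 X k)"

definition tg_r :: "('a::real_vector \<Rightarrow> 'b::real_vector) \<Rightarrow> 'b \<Rightarrow> 'a \<Rightarrow> (nat \<Rightarrow> real)
    \<Rightarrow> (nat \<Rightarrow> 'a) \<Rightarrow> nat \<Rightarrow> 'b" where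
  "tg_r F yd x0 lam X k = F (tg_z x0 lam X k) - yd"

definition tg_H :: "('a::real_inner \<Rightarrow> 'b::real_inner) \<Rightarrow> ('a \<Rightarrow> 'b \<Rightarrow> 'a) \<Rightarrow> 'b \<Rightarrow> real \<Rightarrow> real
    \<Rightarrow> 'a \<Rightarrow> (nat \<Rightarrow> real) \<Rightarrow> (nat \<Rightarrow> 'a) \<Rightarrow> nat \<Rightarrow> 'a set" where
  "tg_H F Fadj yd \<delta> \<eta> x0 lam X k =
     (let z = tg_z x0 lam X k; r = tg_r F yd x0 lam X k; u = Fadj z r;
          \<alpha> = inner u z - (norm r)\<^sup>2; \<xi> = (\<delta> + \<eta> * (norm r + \<delta>)) * norm r
      in strip u \<alpha> \<xi>)"

definition tg_ks :: "(nat \<Rightarrow> nat set) \<Rightarrow> nat \<Rightarrow> nat list" where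
  "tg_ks I k = rev (sorted_list_of_set (I k))"

text \<open>The set onto which p_{j} is projected to obtain p_{j+1} (0-based):
  H_{k_1} \<inter> ... \<inter> H_{k_{j+1}}.\<close>
definition tg_C :: "('a::real_inner \<Rightarrow> 'b::real_inner) \<Rightarrow> ('a \<Rightarrow> 'b \<Rightarrow> 'a) \<Rightarrow> 'b \<Rightarrow> real \<Rightarrow> real
    \<Rightarrow> 'a \<Rightarrow> (nat \<Rightarrow> real) \<Rightarrow> (nat \<Rightarrow> nat set) \<Rightarrow> (nat \<Rightarrow> 'a) \<Rightarrow> nat \<Rightarrow> nat \<Rightarrow> 'a set" where
  "tg_C F Fadj yd \<delta> \<eta> x0 lam I X k j = (\<Inter>i\<le>j. tg_H F Fadj yd \<delta> \<eta> x0 lam X (tg_ks I k ! i))"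

primrec tg_p :: "('a::real_inner \<Rightarrow> 'b::real_inner) \<Rightarrow> ('a \<Rightarrow> 'b \<Rightarrow> 'a) \<Rightarrow> 'b \<Rightarrow> real \<Rightarrow> real
    \<Rightarrow> 'a \<Rightarrow> (nat \<Rightarrow> real) \<Rightarrow> (nat \<Rightarrow> nat set) \<Rightarrow> (nat \<Rightarrow> 'a) \<Rightarrow> nat \<Rightarrow> nat \<Rightarrow> 'a" where
  "tg_p F Fadj yd \<delta> \<eta> x0 lam I X k 0 = tg_z x0 lam X k"
| "tg_p F Fadj yd \<delta> \<eta> x0 lam I X k (Suc j) =
     mproj (tg_C F Fadj yd \<delta> \<eta> x0 lam I X k j) (tg_p F Fadj yd \<delta> \<eta> x0 lam I X k j)"

primrec tg_list :: "('a::real_inner \<Rightarrow> 'b::real_inner) \<Rightarrow> ('a \<Rightarrow> 'b \<Rightarrow> 'a) \<Rightarrow> 'b \<Rightarrow> real \<Rightarrow> real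
    \<Rightarrow> 'a \<Rightarrow> (nat \<Rightarrow> real) \<Rightarrow> (nat \<Rightarrow> nat set) \<Rightarrow> nat \<Rightarrow> 'a list" where
  "tg_list F Fadj yd \<delta> \<eta> x0 lam I 0 = [x0]"
| "tg_list F Fadj yd \<delta> \<eta> x0 lam I (Suc k) =
     (let xs = tg_list F Fadj yd \<delta> \<eta> x0 lam I k
      in xs @ [tg_p F Fadj yd \<delta> \<eta> x0 lam I (\<lambda>i. xs ! i) k (length (tg_ks I k))])"

definition tgss :: "('a::real_inner \<Rightarrow> 'b::real_inner) \<Rightarrow> ('a \<Rightarrow> 'b \<Rightarrow> 'a) \<Rightarrow> 'b \<Rightarrow> real \<Rightarrow> real
    \<Rightarrow> 'a \<Rightarrow> (nat \<Rightarrow> real) \<Rightarrow> (nat \<Rightarrow> nat set) \<Rightarrow> nat \<Rightarrow> 'a" where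
  "tgss F Fadj yd \<delta> \<eta> x0 lam I k = tg_list F Fadj yd \<delta> \<eta> x0 lam I k ! k"

definition tg_kstar :: "(nat \<Rightarrow> real) \<Rightarrow> real \<Rightarrow> real \<Rightarrow> enat" where
  "tg_kstar nr \<tau> \<delta> = (if \<exists>k. nr k \<le> \<tau> * \<delta> then enat (LEAST k. nr k \<le> \<tau> * \<delta>) else \<infinity>)"

end

theory Submission
  imports Defs
begin


lemma infdist_approx:
  fixes A :: "'a::metric_space set"
  assumes "A \<noteq> {}" "e > 0"
  shows "\<exists>a\<in>A. dist x a < infdist x A + e"
proof (rule ccontr)
  assume "\<not> ?thesis"
  then have "\<forall>a\<in>A. infdist x A + e \<le> dist x a" by auto
  then have "infdist x A + e \<le> infdist x A"
    unfolding infdist_notempty[OF assms(1)] by (intro cINF_greatest[OF assms(1)]) auto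
  with assms show False by simp
qed

lemma parallelogram_mid:
  fixes v a b :: "'a::real_inner"
  shows "(norm (a - b))\<^sup>2 = 2 * (norm (v - a))\<^sup>2 + 2 * (norm (v - b))\<^sup>2 - 4 * (norm (v - (1/2) *\<^sub>R (a + b)))\<^sup>2"
  unfolding power2_norm_eq_inner
  by (simp add: inner_diff inner_add inner_commute algebra_simps)

lemma proj_exists:
  fixes C :: "'a::{real_inner,complete_space} set"
  assumes C: "closed C" "convex C" "C \<noteq> {}"
  shows "\<exists>p\<in>C. \<forall>q\<in>C. norm (v - p) \<le> norm (v - q)"
proof -
  define d where "d = infdist v C"
  have d0: "d \<ge> 0" unfolding d_def by (rule infdist_nonneg)
  define e :: "nat \<Rightarrow> real" where "e n = 1 / (real n + 1)" for n
  have epos: "e n > 0" for n unfolding e_def by simp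
  have ele1: "e n \<le> 1" for n unfolding e_def by (simp add: field_simps)
  have "\<forall>n. \<exists>c\<in>C. dist v c < d + e n"
    using infdist_approx[OF C(3) epos] unfolding d_def by blast
  then obtain c where c: "\<And>n. c n \<in> C" "\<And>n. dist v (c n) < d + e n" by metis
  have dle: "d \<le> dist v q" if "q \<in> C" for q unfolding d_def using infdist_le[OF that] .
  have sq: "(norm (v - c n))\<^sup>2 \<le> d\<^sup>2 + (2*d+1) * e n" for n
  proof -
    have "norm (v - c n) \<le> d + e n" using c(2)[of n] by (simp add: dist_norm)
    then have "(norm (v - c n))\<^sup>2 \<le> (d + e n)\<^sup>2" by (simp add: power_mono)
    also have "\<dots> = d\<^sup>2 + (2*d + e n) * e n" by (simp add: power2_eq_square algebra_simps)
    also have "\<dots> \<le> d\<^sup>2 + (2*d+1) * e n" using ele1[of n] epos[of n] by (intro add_left_mono mult_right_mono) auto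
    finally show ?thesis .
  qed
  have cd: "(norm (c n - c m))\<^sup>2 \<le> 2*(2*d+1) * (e n + e m)" for n m
  proof -
    have mid: "(1/2) *\<^sub>R (c n + c m) \<in> C"
      using convexD[OF C(2) c(1)[of n] c(1)[of m], of "1/2" "1/2"] by (simp add: scaleR_add_right)
    have "d \<le> norm (v - (1/2) *\<^sub>R (c n + c m))" using dle[OF mid] by (simp add: dist_norm)
    then have "d\<^sup>2 \<le> (norm (v - (1/2) *\<^sub>R (c n + c m)))\<^sup>2" using d0 by (simp add: power_mono)
    then show ?thesis using parallelogram_mid[of "c n" "c m" v] sq[of n] sq[of m]
      by (simp add: algebra_simps)
  qed
  have "Cauchy c"
  proof (rule metric_CauchyI)
    fix \<epsilon> :: real assume "\<epsilon> > 0"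
    obtain N :: nat where N: "real N > 4*(2*d+1) / \<epsilon>\<^sup>2" using reals_Archimedean2 by blast
    have Npos: "4*(2*d+1) / \<epsilon>\<^sup>2 > 0" using \<open>\<epsilon>>0\<close> d0 by simp
    show "\<exists>M. \<forall>m\<ge>M. \<forall>n\<ge>M. dist (c m) (c n) < \<epsilon>"
    proof (intro exI allI impI)
      fix m n assume mn: "N \<le> m" "N \<le> n"
      have em: "e m \<le> e N" "e n \<le> e N" using mn unfolding e_def by (auto simp: field_simps)
      have "(norm (c m - c n))\<^sup>2 \<le> 2*(2*d+1) * (e m + e n)" by (rule cd)
      also have "\<dots> \<le> 2*(2*d+1) * (2 * e N)" using em d0 by (intro mult_left_mono) auto
      also have "\<dots> = 4*(2*d+1) / (real N + 1)" unfolding e_def by simp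
      also have "\<dots> < \<epsilon>\<^sup>2"
      proof -
        have "4*(2*d+1) < \<epsilon>\<^sup>2 * real N" using N \<open>\<epsilon>>0\<close> by (simp add: field_simps)
        also have "\<dots> \<le> \<epsilon>\<^sup>2 * (real N + 1)" by (simp add: distrib_left)
        finally show ?thesis by (simp add: field_simps)
      qed
      finally have "(norm (c m - c n))\<^sup>2 < \<epsilon>\<^sup>2" .
      then have "norm (c m - c n) < \<epsilon>" using \<open>\<epsilon>>0\<close> by (meson abs_le_square_iff less_le_not_le not_le power2_less_imp_less norm_ge_zero)
      then show "dist (c m) (c n) < \<epsilon>" by (simp add: dist_norm)
    qed
  qed
  then obtain p where lim: "c \<longlonglongrightarrow> p" using Cauchy_convergent_iff convergent_def by blast
  have pC: "p \<in> C" using closed_sequentially[OF C(1)] c(1) lim by blast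
  have "(\<lambda>n. dist v (c n)) \<longlonglongrightarrow> dist v p" by (intro tendsto_intros lim)
  moreover have "(\<lambda>n. d + e n) \<longlonglongrightarrow> d + 0"
  proof (intro tendsto_intros)
    show "e \<longlonglongrightarrow> 0" using LIMSEQ_inverse_real_of_nat unfolding e_def
      by (simp add: inverse_eq_divide add.commute)
  qed
  ultimately have "dist v p \<le> d + 0"
    using c(2) by (intro LIMSEQ_le[where X="\<lambda>n. dist v (c n)"]) (auto intro: less_imp_le)
  then have "norm (v - p) \<le> norm (v - q)" if "q \<in> C" for q using dle[OF that] by (simp add: dist_norm)
  with pC show ?thesis by blast
qed

lemma mproj_props:
  fixes C :: "'a::{real_inner,complete_space} set"
  assumes C: "closed C" "convex C" "C \<noteq> {}"
  shows "has_unique_proj C v" "mproj C v \<in> C" "\<forall>q\<in>C. norm (v - mproj C v) \<le> norm (v - q)"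
proof -
  obtain p where p: "p \<in> C" "\<forall>q\<in>C. norm (v - p) \<le> norm (v - q)" using proj_exists[OF C] by blast
  have uniq: "p' = p" if "p' \<in> C" "\<forall>q\<in>C. norm (v - p') \<le> norm (v - q)" for p'
    using any_closest_point_unique[OF C(2,1) that(1) p(1), of v] that(2) p(2) by (simp add: dist_norm)
  show "has_unique_proj C v" unfolding has_unique_proj_def using p uniq by blast
  have "mproj C v \<in> C \<and> (\<forall>q\<in>C. norm (v - mproj C v) \<le> norm (v - q))"
    unfolding mproj_def by (rule someI[of _ p]) (use p in blast)
  then show "mproj C v \<in> C" "\<forall>q\<in>C. norm (v - mproj C v) \<le> norm (v - q)" by auto
qed

lemma mproj_pyth:
  fixes C :: "'a::{real_inner,complete_space} set"
  assumes C: "closed C" "convex C" and q: "q \<in> C"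
  shows "(norm (v - mproj C v))\<^sup>2 + (norm (mproj C v - q))\<^sup>2 \<le> (norm (v - q))\<^sup>2"
proof -
  have ne: "C \<noteq> {}" using q by auto
  note P = mproj_props[OF C ne, of v]
  define p where "p = mproj C v"
  have "inner (v - p) (q - p) \<le> 0"
    using any_closest_point_dot[OF C(2,1) P(2) q, of v] P(3) unfolding p_def by (simp add: dist_norm)
  moreover have "(norm (v - q))\<^sup>2 = (norm (v - p))\<^sup>2 - 2 * inner (v - p) (q - p) + (norm (p - q))\<^sup>2"
    unfolding power2_norm_eq_inner by (simp add: inner_diff inner_commute algebra_simps)
  ultimately show ?thesis unfolding p_def by linarith
qed

lemma strip_closed: "closed (strip u a \<xi>)"
  unfolding strip_def by (intro closed_Collect_le continuous_intros)

lemma strip_convex: "convex (strip u a \<xi>)"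
proof (rule convexI)
  fix x y :: 'a and s t :: real
  assume x: "x \<in> strip u a \<xi>" and y: "y \<in> strip u a \<xi>" and st: "0 \<le> s" "0 \<le> t" "s + t = 1"
  from x y have x: "\<bar>inner u x - a\<bar> \<le> \<xi>" and y: "\<bar>inner u y - a\<bar> \<le> \<xi>" by (auto simp: strip_def)
  have "inner u (s *\<^sub>R x + t *\<^sub>R y) - a = s * (inner u x - a) + t * (inner u y - a)"
    using st(3) by (simp add: inner_add_right algebra_simps) (metis distrib_left mult.right_neutral)
  also have "\<bar>\<dots>\<bar> \<le> s * \<bar>inner u x - a\<bar> + t * \<bar>inner u y - a\<bar>"
    using st by (simp add: abs_triangle_ineq[THEN order_trans] abs_mult)
  also have "\<dots> \<le> s * \<xi> + t * \<xi>" using st x y by (intro add_mono mult_left_mono) auto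
  also have "s * \<xi> + t * \<xi> = \<xi>" using st(3) by (metis distrib_right mult_1)
  finally show "s *\<^sub>R x + t *\<^sub>R y \<in> strip u a \<xi>" by (simp add: strip_def)
qed

lemma extrap_identity:
  fixes a b xs :: "'a::real_inner"
  shows "(norm (a + l *\<^sub>R (a - b) - xs))\<^sup>2 =
    (1 + l) * (norm (a - xs))\<^sup>2 - l * (norm (b - xs))\<^sup>2 + l * (l + 1) * (norm (a - b))\<^sup>2"
proof -
  have e: "a + l *\<^sub>R (a - b) - xs = (1 + l) *\<^sub>R (a - xs) - l *\<^sub>R (b - xs)" by (simp add: algebra_simps)
  have f: "a - b = (a - xs) - (b - xs)" by simp
  show ?thesis unfolding e f power2_norm_eq_inner
    by (simp add: inner_diff inner_add inner_commute algebra_simps power2_eq_square)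
qed



lemma tg_list_length: "length (tg_list F Fadj yd \<delta> \<eta> x0 lam I k) = Suc k"
  by (induct k) (simp_all add: Let_def)

lemma tg_list_prefix:
  assumes "i \<le> k" "k \<le> m"
  shows "tg_list F Fadj yd \<delta> \<eta> x0 lam I m ! i = tg_list F Fadj yd \<delta> \<eta> x0 lam I k ! i"
  using assms
proof (induct m)
  case 0 then show ?case by simp
next
  case (Suc m)
  show ?case
  proof (cases "k \<le> m")
    case True
    then have "i < length (tg_list F Fadj yd \<delta> \<eta> x0 lam I m)" using Suc.prems by (simp add: tg_list_length)
    then show ?thesis using Suc True by (simp add: Let_def nth_append)
  next
    case False then have "k = Suc m" using Suc.prems by simp
    then show ?thesis by simp
  qed
qed

lemma tg_list_nth: "i \<le> k \<Longrightarrow> tg_list F Fadj yd \<delta> \<eta> x0 lam I k ! i = tgss F Fadj yd \<delta> \<eta> x0 lam I i"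
  unfolding tgss_def by (rule tg_list_prefix) auto

lemma tg_ks_props:
  assumes "finite (I k)" "k \<in> I k" "I k \<subseteq> {..k}"
  shows "set (tg_ks I k) = I k" "tg_ks I k ! 0 = k" "length (tg_ks I k) \<ge> 1"
proof -
  show S: "set (tg_ks I k) = I k" unfolding tg_ks_def using assms(1) by simp
  then show L: "length (tg_ks I k) \<ge> 1" using assms(2)
    by (metis One_nat_def Suc_leI empty_iff length_greater_0_conv list.set(1))
  define xs where "xs = sorted_list_of_set (I k)"
  have xs: "sorted xs" "set xs = I k" "xs \<noteq> []" using assms(1,2) unfolding xs_def by auto
  have "tg_ks I k ! 0 = last xs" unfolding tg_ks_def xs_def[symmetric] using xs(3)
    by (simp add: hd_rev hd_conv_nth[symmetric])
  moreover have "last xs \<in> I k" using xs by (metis last_in_set)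
  moreover have "k \<le> last xs"
  proof -
    obtain i where i: "i < length xs" "xs ! i = k" using xs(2) assms(2) by (metis in_set_conv_nth)
    have "last xs = xs ! (length xs - 1)" using xs(3) by (simp add: last_conv_nth)
    moreover have "xs ! i \<le> xs ! (length xs - 1)" using i xs(1) by (intro sorted_nth_mono) auto
    ultimately show ?thesis using i by simp
  qed
  ultimately show "tg_ks I k ! 0 = k" using assms(3) by fastforce
qed

lemma tg_z_cong: "\<forall>j\<le>i. X j = Y j \<Longrightarrow> tg_z x0 lam X i = tg_z x0 lam Y i"
  by (simp add: tg_z_def tg_prev_def)

lemma tg_H_cong: "\<forall>j\<le>i. X j = Y j \<Longrightarrow> tg_H F Fadj yd \<delta> \<eta> x0 lam X i = tg_H F Fadj yd \<delta> \<eta> x0 lam Y i"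
  unfolding tg_H_def tg_r_def using tg_z_cong[of i X Y x0 lam] by simp

lemma tg_C_cong:
  assumes "\<forall>i\<le>k. X i = Y i" "finite (I k)" "I k \<subseteq> {..k}" "j < length (tg_ks I k)"
  shows "tg_C F Fadj yd \<delta> \<eta> x0 lam I X k j = tg_C F Fadj yd \<delta> \<eta> x0 lam I Y k j"
  unfolding tg_C_def
proof (rule INF_cong[OF refl])
  fix i assume "i \<in> {..j}"
  then have "tg_ks I k ! i \<in> set (tg_ks I k)" using assms(4) by auto
  then have "tg_ks I k ! i \<le> k" using assms(2,3) by (auto simp: tg_ks_def)
  then show "tg_H F Fadj yd \<delta> \<eta> x0 lam X (tg_ks I k ! i) = tg_H F Fadj yd \<delta> \<eta> x0 lam Y (tg_ks I k ! i)"
    using assms(1) by (intro tg_H_cong) auto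
qed

lemma tg_p_cong:
  assumes "\<forall>i\<le>k. X i = Y i" "finite (I k)" "I k \<subseteq> {..k}" "j \<le> length (tg_ks I k)"
  shows "tg_p F Fadj yd \<delta> \<eta> x0 lam I X k j = tg_p F Fadj yd \<delta> \<eta> x0 lam I Y k j"
  using assms(4)
proof (induct j)
  case 0 then show ?case using assms(1) by (simp add: tg_z_cong)
next
  case (Suc j)
  have "tg_C F Fadj yd \<delta> \<eta> x0 lam I X k j = tg_C F Fadj yd \<delta> \<eta> x0 lam I Y k j"
    by (rule tg_C_cong) (use assms Suc.prems in auto)
  then show ?case using Suc by simp
qed

lemma tgss_0: "tgss F Fadj yd \<delta> \<eta> x0 lam I 0 = x0"
  by (simp add: tgss_def)

lemma tgss_Suc:
  assumes "finite (I k)" "I k \<subseteq> {..k}"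
  shows "tgss F Fadj yd \<delta> \<eta> x0 lam I (Suc k) =
    tg_p F Fadj yd \<delta> \<eta> x0 lam I (tgss F Fadj yd \<delta> \<eta> x0 lam I) k (length (tg_ks I k))"
proof -
  define xs where "xs = tg_list F Fadj yd \<delta> \<eta> x0 lam I k"
  have "tgss F Fadj yd \<delta> \<eta> x0 lam I (Suc k) = tg_p F Fadj yd \<delta> \<eta> x0 lam I (\<lambda>i. xs ! i) k (length (tg_ks I k))"
  proof -
    have "length xs = Suc k" unfolding xs_def by (rule tg_list_length)
    then show ?thesis unfolding tgss_def by (simp add: Let_def xs_def[symmetric] nth_append)
  qed
  also have "\<dots> = tg_p F Fadj yd \<delta> \<eta> x0 lam I (tgss F Fadj yd \<delta> \<eta> x0 lam I) k (length (tg_ks I k))"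
    using assms by (intro tg_p_cong) (auto simp: xs_def tg_list_nth)
  finally show ?thesis .
qed



lemma adj_norm:
  fixes A :: "'a::real_inner \<Rightarrow>\<^sub>L 'b::real_inner"
  assumes "\<forall>v w. inner (blinfun_apply A v) w = inner v (G w)" "norm A \<le> c"
  shows "norm (G r) \<le> c * norm r"
proof (cases "norm (G r) = 0")
  case True
  have "0 \<le> c" using assms(2) norm_ge_zero order_trans by blast
  then show ?thesis using True by simp
next
  case False
  have "(norm (G r))\<^sup>2 = inner (blinfun_apply A (G r)) r"
    using assms(1) by (simp add: power2_norm_eq_inner inner_commute)
  also have "\<dots> \<le> norm (blinfun_apply A (G r)) * norm r" by (rule norm_cauchy_schwarz)
  also have "\<dots> \<le> norm A * norm (G r) * norm r" by (intro mult_right_mono norm_blinfun) auto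
  also have "\<dots> \<le> c * norm (G r) * norm r" using assms(2) by (intro mult_right_mono) auto
  finally have "norm (G r) * norm (G r) \<le> norm (G r) * (c * norm r)"
    by (simp add: power2_eq_square algebra_simps)
  then show ?thesis using False norm_ge_zero[of "G r"] by (simp add: mult_le_cancel_left)
qed

lemma xstar_in_strip:
  fixes A :: "'a::real_inner \<Rightarrow>\<^sub>L 'b::real_inner"
  assumes lin: "norm (F z - F xs - blinfun_apply A (z - xs)) \<le> \<eta> * norm (F z - F xs)"
    and adj: "\<forall>v w. inner (blinfun_apply A v) w = inner v (G w)"
    and "F xs = y" "norm (yd - y) \<le> \<delta>" "\<eta> \<ge> 0"
  shows "xs \<in> strip (G (F z - yd)) (inner (G (F z - yd)) z - (norm (F z - yd))\<^sup>2)
                ((\<delta> + \<eta> * (norm (F z - yd) + \<delta>)) * norm (F z - yd))"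
proof -
  define r where "r = F z - yd"
  define w where "w = F z - F xs - blinfun_apply A (z - xs)"
  have "inner (G r) xs - (inner (G r) z - (norm r)\<^sup>2) = inner (G r) (xs - z) + inner r r"
    by (simp add: inner_diff_right power2_norm_eq_inner)
  also have "inner (G r) (xs - z) = inner (blinfun_apply A (xs - z)) r"
    using adj by (simp add: inner_commute)
  also have "blinfun_apply A (xs - z) = - blinfun_apply A (z - xs)"
    by (metis blinfun.minus_right minus_diff_eq)
  also have "inner (- blinfun_apply A (z - xs)) r + inner r r = inner (w + (y - yd)) r"
    unfolding w_def r_def using assms(3) by (simp add: inner_add_left inner_diff_left algebra_simps)
  finally have eq: "inner (G r) xs - (inner (G r) z - (norm r)\<^sup>2) = inner (w + (y - yd)) r" .
  have "\<bar>inner (w + (y - yd)) r\<bar> \<le> norm (w + (y - yd)) * norm r" by (rule Cauchy_Schwarz_ineq2)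
  also have "norm (w + (y - yd)) \<le> \<eta> * (norm r + \<delta>) + \<delta>"
  proof -
    have "norm (w + (y - yd)) \<le> norm w + norm (y - yd)" by (rule norm_triangle_ineq)
    moreover have "norm (y - yd) \<le> \<delta>" using assms(4) by (simp add: norm_minus_commute)
    moreover have "norm w \<le> \<eta> * norm (F z - y)" using lin assms(3) unfolding w_def by simp
    moreover have "norm (F z - y) \<le> norm r + \<delta>"
    proof -
      have "F z - y = r + (yd - y)" unfolding r_def by simp
      then show ?thesis by (simp only:) (rule order_trans[OF norm_triangle_ineq], use assms(4) in simp)
    qed
    ultimately show ?thesis using assms(5)
      by (smt (verit, best) mult_left_mono)
  qed
  then have "norm (w + (y - yd)) * norm r \<le> (\<eta> * (norm r + \<delta>) + \<delta>) * norm r" by (intro mult_right_mono) auto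
  finally show ?thesis unfolding strip_def r_def[symmetric] using eq by (simp add: algebra_simps)
qed

lemma strip_far:
  fixes u z p :: "'a::real_inner"
  assumes p: "p \<in> strip u (inner u z - (norm r)\<^sup>2) ((\<delta> + \<eta> * (norm r + \<delta>)) * norm r)"
    and un: "norm u \<le> cF * norm r" and rbig: "\<tau> * \<delta> < norm r"
    and tau: "\<tau> > (1 + \<eta>) / (1 - \<eta>)" and eta: "0 < \<eta>" "\<eta> < 1" and d: "\<delta> \<ge> 0"
  shows "((1 - \<eta>) - (1 + \<eta>) / \<tau>)\<^sup>2 * (norm r)\<^sup>2 \<le> cF\<^sup>2 * (norm (z - p))\<^sup>2"
proof -
  define \<Psi> where "\<Psi> = (1 - \<eta>) - (1 + \<eta>) / \<tau>"
  have taupos: "\<tau> > 0" using tau eta by (smt (verit) divide_pos_pos)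
  have Psipos: "\<Psi> > 0"
  proof -
    have "1 + \<eta> < \<tau> * (1 - \<eta>)" using tau eta by (simp add: field_simps)
    then have "(1 + \<eta>) / \<tau> < 1 - \<eta>" using taupos by (simp add: field_simps)
    then show ?thesis unfolding \<Psi>_def by simp
  qed
  have rpos: "norm r > 0" using rbig taupos d by (smt (verit) mult_nonneg_nonneg)
  have dle: "\<delta> \<le> norm r / \<tau>" using rbig taupos by (simp add: field_simps)
  have pin: "\<bar>inner u p - (inner u z - (norm r)\<^sup>2)\<bar> \<le> (\<delta> + \<eta> * (norm r + \<delta>)) * norm r"
    using p by (simp add: strip_def)
  have "(norm r)\<^sup>2 - (\<delta> + \<eta> * (norm r + \<delta>)) * norm r = ((1 - \<eta>) * norm r - (1 + \<eta>) * \<delta>) * norm r"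
    by (simp add: power2_eq_square algebra_simps)
  also have "\<dots> \<ge> \<Psi> * norm r * norm r"
  proof -
    have "(1 + \<eta>) * \<delta> \<le> (1 + \<eta>) * (norm r / \<tau>)" using dle eta by (intro mult_left_mono) auto
    then have "\<Psi> * norm r \<le> (1 - \<eta>) * norm r - (1 + \<eta>) * \<delta>" unfolding \<Psi>_def by (simp add: algebra_simps)
    then show ?thesis using rpos by (intro mult_right_mono) auto
  qed
  finally have A: "\<Psi> * norm r * norm r \<le> inner u (z - p)"
    using pin by (simp add: inner_diff_right abs_le_iff)
  also have "\<dots> \<le> norm u * norm (z - p)" by (rule norm_cauchy_schwarz)
  also have "\<dots> \<le> cF * norm r * norm (z - p)" using un by (intro mult_right_mono) auto
  finally have "(\<Psi> * norm r) * norm r \<le> (cF * norm (z - p)) * norm r" by (simp add: algebra_simps)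
  then have B: "\<Psi> * norm r \<le> cF * norm (z - p)" using rpos by simp
  have "0 \<le> \<Psi> * norm r" using Psipos rpos by simp
  then have "(\<Psi> * norm r)\<^sup>2 \<le> (cF * norm (z - p))\<^sup>2" by (rule power_mono[OF B])
  then show ?thesis unfolding \<Psi>_def by (simp add: power_mult_distrib)
qed



theorem proposition4p2:
  fixes F :: "'a::{real_inner,complete_space} \<Rightarrow> 'b::{real_inner,complete_space}"
    and F' :: "'a \<Rightarrow> 'a \<Rightarrow>\<^sub>L 'b"
    and Fadj :: "'a \<Rightarrow> 'b \<Rightarrow> 'a"
    and D :: "'a set"
    and x0 xstar :: 'a
    and y yd :: 'b
    and \<rho> \<eta> cF \<delta> \<tau> \<mu> :: real
    and K :: nat
    and lam :: "nat \<Rightarrow> real"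
    and I :: "nat \<Rightarrow> nat set"
  assumes deriv: "\<forall>x\<in>D. (F has_derivative blinfun_apply (F' x)) (at x within D)"
    and deriv_cont: "continuous_on D F'"
    and adjoint: "\<forall>x\<in>D. \<forall>v w. inner (blinfun_apply (F' x) v) w = inner v (Fadj x w)"
    and rho_pos: "\<rho> > 0"
    and domain: "cball x0 (4 * \<rho>) \<subseteq> D"
    and A1: "xstar \<in> cball x0 \<rho>" "F xstar = y"
    and A2: "0 < \<eta>" "\<eta> < 1"
      "\<forall>x\<in>cball x0 (4 * \<rho>). \<forall>x'\<in>cball x0 (4 * \<rho>).
         norm (F x - F x' - blinfun_apply (F' x) (x - x')) \<le> \<eta> * norm (F x - F x')"
    and A3: "\<forall>x\<in>cball x0 (4 * \<rho>). 0 < norm (F' x) \<and> norm (F' x) \<le> cF"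
    and data: "\<delta> \<ge> 0" "norm (yd - y) \<le> \<delta>"
    and K_ge: "K \<ge> 1"
    and lam: "\<forall>k. 0 \<le> lam k \<and> lam k \<le> 1" "lam 0 = 0"
    and Iset: "\<forall>k. finite (I k) \<and> k \<in> I k \<and> I k \<subseteq> {k - K..k}"
    and tau: "\<tau> > (1 + \<eta>) / (1 - \<eta>)"
    and mu: "\<mu> > 1"
    and X_def: "X \<equiv> tgss F Fadj yd \<delta> \<eta> x0 lam I"
    and r_def: "r \<equiv> tg_r F yd x0 lam X"
    and kstar_def: "kstar \<equiv> tg_kstar (\<lambda>k. norm (r k)) \<tau> \<delta>"
    and Psi_def: "\<Psi> \<equiv> (1 - \<eta>) - (1 + \<eta>) / \<tau>"
    and coupling: "\<forall>k. enat k < kstar \<longrightarrow>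
       lam k * (lam k + 1) * (norm (X k - tg_prev x0 X k))\<^sup>2 \<le> \<Psi>\<^sup>2 * (norm (r k))\<^sup>2 / (\<mu> * cF\<^sup>2)"
  shows "(\<forall>k. enat k < kstar \<longrightarrow>
            tg_z x0 lam X k \<in> cball x0 (4 * \<rho>) \<and>
            (\<forall>j < length (tg_ks I k).
               has_unique_proj (tg_C F Fadj yd \<delta> \<eta> x0 lam I X k j)
                               (tg_p F Fadj yd \<delta> \<eta> x0 lam I X k j)))
       \<and> norm (X 0 - xstar) \<le> norm (tg_prev x0 X 0 - xstar)
       \<and> (\<forall>k. enat k < kstar \<longrightarrow> norm (X (Suc k) - xstar) \<le> norm (X k - xstar))
       \<and> tg_prev x0 X 0 \<in> cball xstar \<rho>
       \<and> (\<forall>k. enat k \<le> kstar \<longrightarrow> X k \<in> cball xstar \<rho>)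
       \<and> cball xstar \<rho> \<subseteq> cball x0 (2 * \<rho>)
       \<and> (\<forall>n. enat n \<le> kstar \<longrightarrow>
            (\<Sum>k<n. (norm (r k))\<^sup>2) \<le> cF\<^sup>2 / (((\<mu> - 1) / \<mu>) * \<Psi>\<^sup>2) * (norm (x0 - xstar))\<^sup>2)"
proof -
  let ?z = "tg_z x0 lam X"
  let ?pv = "tg_prev x0 X"
  let ?H = "tg_H F Fadj yd \<delta> \<eta> x0 lam X"
  let ?C = "tg_C F Fadj yd \<delta> \<eta> x0 lam I X"
  let ?p = "tg_p F Fadj yd \<delta> \<eta> x0 lam I X"
  let ?ks = "tg_ks I"
  have Ik: "finite (I k)" "k \<in> I k" "I k \<subseteq> {..k}" for k using Iset by (auto, fastforce)
  have X0: "X 0 = x0" unfolding X_def by (rule tgss_0)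
  have Xs: "X (Suc k) = ?p k (length (?ks k))" for k
    unfolding X_def by (rule tgss_Suc[OF Ik(1,3)])
  have pv0: "?pv 0 = x0" by (simp add: tg_prev_def)
  have pvS: "?pv (Suc k) = X k" for k by (simp add: tg_prev_def)
  have rz: "r k = F (?z k) - yd" for k unfolding r_def tg_r_def by simp
  have Hk: "?H k = strip (Fadj (?z k) (r k)) (inner (Fadj (?z k) (r k)) (?z k) - (norm (r k))\<^sup>2)
                 ((\<delta> + \<eta> * (norm (r k) + \<delta>)) * norm (r k))" for k
    unfolding tg_H_def Let_def r_def by simp
  have x0b: "x0 \<in> cball x0 (4 * \<rho>)" using rho_pos by simp
  have cFpos: "cF > 0" using A3 x0b by (meson order_less_le_trans)
  have taupos: "\<tau> > 0" using tau A2 by (smt (verit) divide_pos_pos)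
  have Psipos: "\<Psi> > 0"
  proof -
    have "1 + \<eta> < \<tau> * (1 - \<eta>)" using tau A2 by (simp add: field_simps)
    then have "(1 + \<eta>) / \<tau> < 1 - \<eta>" using taupos by (simp add: field_simps)
    then show ?thesis unfolding Psi_def by simp
  qed
  have rbig: "\<tau> * \<delta> < norm (r k)" if "enat k < kstar" for k
  proof (cases "\<exists>k. norm (r k) \<le> \<tau> * \<delta>")
    case True
    then have "k < (LEAST k. norm (r k) \<le> \<tau> * \<delta>)" using that unfolding kstar_def tg_kstar_def by simp
    then show ?thesis using not_less_Least by fastforce
  next
    case False then show ?thesis by (meson not_le)
  qed
  have xsb: "xstar \<in> cball x0 (4 * \<rho>)" using A1(1) rho_pos by (auto simp: dist_norm)
  have xs0: "norm (x0 - xstar) \<le> \<rho>" using A1(1) by (simp add: dist_norm)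
  have zb: "?z i \<in> cball x0 (4 * \<rho>)" if H: "\<forall>i'\<le>k. X i' \<in> cball xstar \<rho>" and ik: "i \<le> k" for i k
  proof -
    have a: "norm (X i - xstar) \<le> \<rho>" using H ik by (simp add: dist_norm norm_minus_commute)
    have b: "norm (?pv i - xstar) \<le> \<rho>"
    proof (cases i)
      case 0 then show ?thesis using xs0 by (simp add: tg_prev_def)
    next
      case (Suc i') then show ?thesis using H ik by (simp add: tg_prev_def dist_norm norm_minus_commute)
    qed
    have d: "norm (X i - ?pv i) \<le> 2 * \<rho>"
      using norm_triangle_ineq4[of "X i - xstar" "?pv i - xstar"] a b by simp
    have l: "0 \<le> lam i" "lam i \<le> 1" using lam by auto
    have "norm (lam i *\<^sub>R (X i - ?pv i)) \<le> 2 * \<rho>"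
      using l d rho_pos by (simp add: mult_le_one order_trans[OF mult_left_le_one_le] mult_left_le_one_le)
    moreover have "?z i - x0 = (X i - xstar) + lam i *\<^sub>R (X i - ?pv i) + (xstar - x0)"
      by (simp add: tg_z_def)
    moreover have "norm (xstar - x0) \<le> \<rho>" using xs0 by (simp add: norm_minus_commute)
    ultimately have "norm (?z i - x0) \<le> 4 * \<rho>"
      using a norm_triangle_ineq[of "(X i - xstar) + lam i *\<^sub>R (X i - ?pv i)" "xstar - x0"]
            norm_triangle_ineq[of "X i - xstar" "lam i *\<^sub>R (X i - ?pv i)"] by simp
    then show ?thesis by (simp add: dist_norm norm_minus_commute)
  qed
  have xsH: "xstar \<in> ?H i" if "?z i \<in> cball x0 (4 * \<rho>)" for i
  proof -
    have zD: "?z i \<in> D" using that domain by auto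
    show ?thesis unfolding Hk rz
      by (rule xstar_in_strip[where A="F' (?z i)"])
        (use A2(3) that xsb adjoint zD A1(2) data A2(1) in auto)
  qed
  have un: "norm (Fadj (?z i) (r i)) \<le> cF * norm (r i)" if "?z i \<in> cball x0 (4 * \<rho>)" for i
    by (rule adj_norm[where A="F' (?z i)"]) (use adjoint that domain A3 in auto)
  have step: "?z k \<in> cball x0 (4 * \<rho>) \<and>
      (\<forall>j < length (?ks k). has_unique_proj (?C k j) (?p k j)) \<and>
      cF\<^sup>2 * (norm (X (Suc k) - xstar))\<^sup>2 + \<Psi>\<^sup>2 * (norm (r k))\<^sup>2 \<le> cF\<^sup>2 * (norm (?z k - xstar))\<^sup>2"
    if kk: "enat k < kstar" and H: "\<forall>i\<le>k. X i \<in> cball xstar \<rho>" for k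
  proof -
    have zk: "?z k \<in> cball x0 (4 * \<rho>)" using zb[OF H] by simp
    have ksk: "?ks k ! i \<le> k" if "i < length (?ks k)" for i
      using that tg_ks_props(1)[of I k, OF Ik(1) Ik(2) Ik(3)] Ik(3)[of k] nth_mem[OF that] by auto
    have Cj: "closed (?C k j) \<and> convex (?C k j) \<and> xstar \<in> ?C k j" if "j < length (?ks k)" for j
    proof (intro conjI)
      show "closed (?C k j)" unfolding tg_C_def Hk by (intro closed_INT ballI strip_closed)
      show "convex (?C k j)" unfolding tg_C_def Hk by (intro convex_INT ballI strip_convex)
      show "xstar \<in> ?C k j" unfolding tg_C_def
      proof (intro INT_I)
        fix i assume "i \<in> {..j}"
        then have "?ks k ! i \<le> k" using that ksk by auto
        then show "xstar \<in> ?H (?ks k ! i)" using zb[OF H] xsH by blast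
      qed
    qed
    have uq: "\<forall>j < length (?ks k). has_unique_proj (?C k j) (?p k j)"
      using Cj mproj_props(1) by blast
    have L: "length (?ks k) \<ge> 1" by (rule tg_ks_props(3)[of I k, OF Ik(1) Ik(2) Ik(3)])
    have chain: "(norm (?p k j - xstar))\<^sup>2 \<le> (norm (?p k 1 - xstar))\<^sup>2" if "1 \<le> j" "j \<le> length (?ks k)" for j
      using that
    proof (induct j)
      case 0 then show ?case by simp
    next
      case (Suc j)
      show ?case
      proof (cases "j = 0")
        case True then show ?thesis by simp
      next
        case False
        have cj: "closed (?C k j)" "convex (?C k j)" "xstar \<in> ?C k j" using Cj[of j] Suc.prems by auto
        have "(norm (mproj (?C k j) (?p k j) - xstar))\<^sup>2 \<le> (norm (?p k j - xstar))\<^sup>2"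
          using mproj_pyth[OF cj(1,2,3), of "?p k j"] zero_le_power2[of "norm (?p k j - mproj (?C k j) (?p k j))"]
          by linarith
        then have "(norm (?p k (Suc j) - xstar))\<^sup>2 \<le> (norm (?p k j - xstar))\<^sup>2" by simp
        also have "\<dots> \<le> (norm (?p k 1 - xstar))\<^sup>2" using Suc False by simp
        finally show ?thesis .
      qed
    qed
    have c0: "closed (?C k 0)" "convex (?C k 0)" "xstar \<in> ?C k 0" using Cj[of 0] L by (simp_all add: Suc_le_eq)
    have C0: "?C k 0 = ?H k" unfolding tg_C_def using tg_ks_props(2)[of I k, OF Ik(1) Ik(2) Ik(3)] by simp
    have p1: "?p k 1 = mproj (?C k 0) (?z k)" by simp
    have pyth1: "(norm (?z k - ?p k 1))\<^sup>2 + (norm (?p k 1 - xstar))\<^sup>2 \<le> (norm (?z k - xstar))\<^sup>2"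
      unfolding p1 by (rule mproj_pyth[OF c0])
    have p1H: "?p k 1 \<in> ?H k" unfolding p1 using mproj_props(2)[of "?C k 0" "?z k"] c0 C0 by auto
    have far: "\<Psi>\<^sup>2 * (norm (r k))\<^sup>2 \<le> cF\<^sup>2 * (norm (?z k - ?p k 1))\<^sup>2"
      unfolding Psi_def
      by (rule strip_far[OF p1H[unfolded Hk] un[OF zk] rbig[OF kk] tau A2(1,2) data(1)])
    have "(norm (X (Suc k) - xstar))\<^sup>2 \<le> (norm (?p k 1 - xstar))\<^sup>2"
      unfolding Xs using chain[of "length (?ks k)"] L by simp
    then have "cF\<^sup>2 * (norm (X (Suc k) - xstar))\<^sup>2 \<le> cF\<^sup>2 * (norm (?p k 1 - xstar))\<^sup>2"
      by (intro mult_left_mono) auto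
    moreover have "cF\<^sup>2 * (norm (?z k - ?p k 1))\<^sup>2 + cF\<^sup>2 * (norm (?p k 1 - xstar))\<^sup>2 \<le> cF\<^sup>2 * (norm (?z k - xstar))\<^sup>2"
      using pyth1 by (metis distrib_left mult_left_mono zero_le_power2)
    ultimately have "cF\<^sup>2 * (norm (X (Suc k) - xstar))\<^sup>2 + \<Psi>\<^sup>2 * (norm (r k))\<^sup>2 \<le> cF\<^sup>2 * (norm (?z k - xstar))\<^sup>2"
      using far by linarith
    then show ?thesis using zk uq by blast
  qed
  define c where "c = ((\<mu> - 1) / \<mu>) * \<Psi>\<^sup>2 / cF\<^sup>2"
  have cpos: "c > 0" unfolding c_def using mu Psipos cFpos by simp
  have Q: "(\<forall>i\<le>k. X i \<in> cball xstar \<rho>) \<and> (\<forall>i\<le>k. norm (X i - xstar) \<le> norm (?pv i - xstar)) \<and>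
      c * (\<Sum>i<k. (norm (r i))\<^sup>2) + (norm (X k - xstar))\<^sup>2 \<le> (norm (x0 - xstar))\<^sup>2"
    if "enat k \<le> kstar" for k
    using that
  proof (induct k)
    case 0
    show ?case using X0 pv0 xs0 by (simp add: dist_norm norm_minus_commute)
  next
    case (Suc k)
    have kk: "enat k < kstar" using Suc.prems by (metis Suc_ile_eq)
    then have IH: "\<forall>i\<le>k. X i \<in> cball xstar \<rho>" "\<forall>i\<le>k. norm (X i - xstar) \<le> norm (?pv i - xstar)"
      "c * (\<Sum>i<k. (norm (r i))\<^sup>2) + (norm (X k - xstar))\<^sup>2 \<le> (norm (x0 - xstar))\<^sup>2"
      using Suc.hyps by (auto simp: order_less_imp_le)
    note st = step[OF kk IH(1)]
    define a where "a = (norm (X k - xstar))\<^sup>2"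
    define b where "b = (norm (?pv k - xstar))\<^sup>2"
    define Dl where "Dl = lam k * (lam k + 1) * (norm (X k - ?pv k))\<^sup>2"
    define R where "R = (norm (r k))\<^sup>2"
    define X1 where "X1 = (norm (X (Suc k) - xstar))\<^sup>2"
    have ab: "a \<le> b" unfolding a_def b_def using IH(2) by (simp add: power_mono)
    have Z: "(norm (?z k - xstar))\<^sup>2 = (1 + lam k) * a - lam k * b + Dl"
      unfolding a_def b_def Dl_def tg_z_def by (rule extrap_identity)
    have cp: "Dl \<le> \<Psi>\<^sup>2 * R / (\<mu> * cF\<^sup>2)" unfolding Dl_def R_def using coupling kk by simp
    have lb: "lam k * (a - b) \<le> 0" using lam ab by (simp add: mult_nonneg_nonpos)
    have main: "cF\<^sup>2 * X1 + \<Psi>\<^sup>2 * R \<le> cF\<^sup>2 * ((1 + lam k) * a - lam k * b + Dl)"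
      using st Z unfolding X1_def R_def by simp
    have "cF\<^sup>2 * Dl \<le> \<Psi>\<^sup>2 * R / \<mu>" using cp cFpos mu
      by (simp add: field_simps)
    then have "cF\<^sup>2 * X1 + \<Psi>\<^sup>2 * R \<le> cF\<^sup>2 * a + \<Psi>\<^sup>2 * R / \<mu>"
    proof -
      have e: "cF\<^sup>2 * ((1 + lam k) * a - lam k * b + Dl) = cF\<^sup>2 * a + cF\<^sup>2 * (lam k * (a - b)) + cF\<^sup>2 * Dl"
        by (simp add: algebra_simps)
      have "cF\<^sup>2 * (lam k * (a - b)) \<le> 0" using lb by (simp add: mult_nonneg_nonpos)
      then show ?thesis using main e \<open>cF\<^sup>2 * Dl \<le> \<Psi>\<^sup>2 * R / \<mu>\<close> by linarith
    qed
    then have "cF\<^sup>2 * X1 + (\<Psi>\<^sup>2 * R - \<Psi>\<^sup>2 * R / \<mu>) \<le> cF\<^sup>2 * a" by linarith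
    moreover have "\<Psi>\<^sup>2 * R - \<Psi>\<^sup>2 * R / \<mu> = cF\<^sup>2 * (c * R)"
      unfolding c_def using mu cFpos by (simp add: field_simps)
    ultimately have "cF\<^sup>2 * (X1 + c * R) \<le> cF\<^sup>2 * a" by (simp add: distrib_left)
    then have dec: "X1 + c * R \<le> a" using cFpos by simp
    have "X (Suc k) \<in> cball xstar \<rho>"
    proof -
      have "X1 \<le> a" using dec cpos unfolding R_def by (smt (verit) mult_nonneg_nonneg zero_le_power2)
      then have "norm (X (Suc k) - xstar) \<le> norm (X k - xstar)" unfolding X1_def a_def
        by (simp add: power2_le_iff_abs_le)
      moreover have "norm (X k - xstar) \<le> \<rho>" using IH(1) by (simp add: dist_norm norm_minus_commute)
      ultimately show ?thesis by (simp add: dist_norm norm_minus_commute)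
    qed
    moreover have "norm (X (Suc k) - xstar) \<le> norm (?pv (Suc k) - xstar)"
    proof -
      have "X1 \<le> a" using dec cpos unfolding R_def by (smt (verit) mult_nonneg_nonneg zero_le_power2)
      then show ?thesis unfolding X1_def a_def pvS by (simp add: power2_le_iff_abs_le)
    qed
    moreover have "c * (\<Sum>i<Suc k. (norm (r i))\<^sup>2) + X1 \<le> (norm (x0 - xstar))\<^sup>2"
      using IH(3) dec unfolding a_def R_def by (simp add: distrib_left)
    ultimately show ?case using IH(1,2) unfolding X1_def by (auto simp: le_Suc_eq)
  qed
  have P1: "\<forall>k. enat k < kstar \<longrightarrow> ?z k \<in> cball x0 (4 * \<rho>) \<and>
      (\<forall>j<length (?ks k). has_unique_proj (?C k j) (?p k j))"
  proof (intro allI impI)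
    fix k assume kk: "enat k < kstar"
    then have "enat k \<le> kstar" by simp
    note st = step[OF kk conjunct1[OF Q[OF this]]]
    show "?z k \<in> cball x0 (4 * \<rho>) \<and> (\<forall>j<length (?ks k). has_unique_proj (?C k j) (?p k j))"
      using st by blast
  qed
  show ?thesis
  proof (rule conjI[OF P1], intro conjI allI impI)
    show "norm (X 0 - xstar) \<le> norm (?pv 0 - xstar)" using X0 pv0 by simp
  next
    fix k assume kk: "enat k < kstar"
    then have "enat (Suc k) \<le> kstar" by (simp add: Suc_ile_eq)
    then show "norm (X (Suc k) - xstar) \<le> norm (X k - xstar)" using Q pvS by fastforce
  next
    show "?pv 0 \<in> cball xstar \<rho>" using pv0 xs0 by (simp add: dist_norm norm_minus_commute)
  next
    fix k assume "enat k \<le> kstar"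
    then show "X k \<in> cball xstar \<rho>" using Q by blast
  next
    show "cball xstar \<rho> \<subseteq> cball x0 (2 * \<rho>)"
    proof
      fix x assume "x \<in> cball xstar \<rho>"
      then have "dist x0 x \<le> dist x0 xstar + dist xstar x" "dist xstar x \<le> \<rho>" "dist x0 xstar \<le> \<rho>"
        using A1(1) dist_triangle by auto
      then show "x \<in> cball x0 (2 * \<rho>)" by simp
    qed
  next
    fix n assume "enat n \<le> kstar"
    then have "c * (\<Sum>i<n. (norm (r i))\<^sup>2) \<le> (norm (x0 - xstar))\<^sup>2"
      using Q[of n] by (smt (verit) zero_le_power2)
    then have "(\<Sum>i<n. (norm (r i))\<^sup>2) \<le> (norm (x0 - xstar))\<^sup>2 / c" using cpos by (simp add: field_simps)
    also have "\<dots> = cF\<^sup>2 / (((\<mu> - 1) / \<mu>) * \<Psi>\<^sup>2) * (norm (x0 - xstar))\<^sup>2" unfolding c_def by simp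
    finally show "(\<Sum>k<n. (norm (r k))\<^sup>2) \<le> cF\<^sup>2 / (((\<mu> - 1) / \<mu>) * \<Psi>\<^sup>2) * (norm (x0 - xstar))\<^sup>2" .
  qed
qed

end
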